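(* Let $G=(V,E)$ be a graph on $V=\{1,\ldots,n\}$ and $b(\mathbf x)=\sum_{ij\in E}a_{ij}x_ix_j$ with $a_{ij}\neq 0$ for all $ij\in E$. Then $Q=\operatorname{conv}(B)$ if and only if every cycle in $G$ contains an even number of positive edges and an even number of negative edges.
   Context: An edge $ij$ is positive if $a_{ij}>0$ and negative if $a_{ij}<0$. $B=\{(\mathbf x,z)\in[0,1]^n\times\mathbb R: z=b(\mathbf x)\}$ is the graph of $b$ and $\operatorname{conv}(B)$ its convex hull. The McCormick polytopes are $P=\{(\mathbf x,\mathbf y)\in[0,1]^n\times[0,1]^{|E|}: y_{ij}\le x_i,\ y_{ij}\le x_j,\ y_{ij}\ge x_i+x_j-1\ \forall ij\in E\}$ and $Q=\{(\mathbf x,z)\in[0,1]^n\times\mathbb R:\exists\mathbf y\in[0,1]^{|E|}\text{ with }(\mathbf x,\mathbf y)\in P,\ z=\sum_{ij\in E}a_{ij}y_{ij}\}$. *)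

theory Defs
  imports "HOL-Analysis.Analysis"
begin

text \<open>Vertices are the elements of a finite type 'n (playing the role of V = {1..n});
  points x in [0,1]^n are vectors of type real^'n. Edges are 2-element vertex sets.\<close>

definition simple_graph :: "('n::finite) set set \<Rightarrow> bool" where
  "simple_graph E \<longleftrightarrow> (\<forall>e\<in>E. card e = 2)"

definition unit_box :: "(real^('n::finite)) set" where
  "unit_box = {x. \<forall>i. 0 \<le> x$i \<and> x$i \<le> 1}"

definition bilin :: "('n::finite) set set \<Rightarrow> ('n set \<Rightarrow> real) \<Rightarrow> real^'n \<Rightarrow> real" where
  "bilin E a x = (\<Sum>e\<in>E. a e * (\<Prod>i\<in>e. x$i))"

definition graphB :: "('n::finite) set set \<Rightarrow> ('n set \<Rightarrow> real) \<Rightarrow> ((real^'n) \<times> real) set" where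
  "graphB E a = {(x, z). x \<in> unit_box \<and> z = bilin E a x}"

definition mccormickP :: "('n::finite) set set \<Rightarrow> ((real^'n) \<times> ('n set \<Rightarrow> real)) set" where
  "mccormickP E = {(x, y). x \<in> unit_box \<and>
     (\<forall>e\<in>E. 0 \<le> y e \<and> y e \<le> 1 \<and> (\<forall>i\<in>e. y e \<le> x$i) \<and>
        (\<forall>i\<in>e. \<forall>j\<in>e. i \<noteq> j \<longrightarrow> x$i + x$j - 1 \<le> y e))}"

definition mccormickQ :: "('n::finite) set set \<Rightarrow> ('n set \<Rightarrow> real) \<Rightarrow> ((real^'n) \<times> real) set" where
  "mccormickQ E a = {(x, z). x \<in> unit_box \<and>
     (\<exists>y. (x, y) \<in> mccormickP E \<and> z = (\<Sum>e\<in>E. a e * y e))}"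

definition is_cycle :: "'n set set \<Rightarrow> 'n list \<Rightarrow> bool" where
  "is_cycle E vs \<longleftrightarrow> length vs \<ge> 3 \<and> distinct vs \<and>
     (\<forall>i < length vs. {vs ! i, vs ! ((i + 1) mod length vs)} \<in> E)"

definition cycle_edges :: "'n list \<Rightarrow> 'n set set" where
  "cycle_edges vs = {{vs ! i, vs ! ((i + 1) mod length vs)} | i. i < length vs}"

end

theory Submission
  imports Defs
begin


locale grid =
  fixes X :: "real set"
  assumes fin: "finite X" and X01: "X \<subseteq> {0..1}" and X0: "0 \<in> X" and X1: "1 \<in> X"
begin

definition ts where "ts = sorted_list_of_set X"

lemma ts_set: "set ts = X" using fin by (simp add: ts_def)
lemma ts_strict: "sorted_wrt (<) ts" by (simp add: ts_def strict_sorted_list_of_set)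
lemma ts_sorted: "sorted ts" by (simp add: ts_def)

lemma ts_less_iff: "i < length ts \<Longrightarrow> j < length ts \<Longrightarrow> ts!i < ts!j \<longleftrightarrow> i < j"
  using ts_strict ts_sorted
  by (metis linorder_not_less sorted_nth_mono sorted_wrt_nth_less)

lemma ts_le_iff: "i < length ts \<Longrightarrow> j < length ts \<Longrightarrow> ts!i \<le> ts!j \<longleftrightarrow> i \<le> j"
  using ts_less_iff by (meson linorder_not_less)

lemma ts_mem: "i < length ts \<Longrightarrow> ts!i \<in> X"
  using ts_set nth_mem by blast

lemma ts_range: "i < length ts \<Longrightarrow> 0 \<le> ts!i \<and> ts!i \<le> 1"
  using ts_mem X01 by (meson atLeastAtMost_iff subsetD)

lemma ts_idx: "c \<in> X \<Longrightarrow> \<exists>j<length ts. ts!j = c"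
  using ts_set by (metis in_set_conv_nth)

lemma ts_len: "2 \<le> length ts"
proof -
  have "card X = length ts" using fin by (simp add: ts_def)
  moreover have "{0,1} \<subseteq> X" using X0 X1 by auto
  hence "card {0::real,1} \<le> card X" using fin card_mono by blast
  ultimately show ?thesis by simp
qed

lemma ts0: "ts!0 = 0"
proof -
  obtain j where j: "j < length ts" "ts!j = 0" using ts_idx X0 by blast
  have "ts!0 \<le> ts!j" using j ts_le_iff[of 0 j] by (metis gr_zeroI less_nat_zero_code zero_le)
  moreover have "0 \<le> ts!0" using ts_range[of 0] ts_len by fastforce
  ultimately show ?thesis using j by simp
qed

lemma grid_step: "d \<in> X \<Longrightarrow> k < length ts - 1 \<Longrightarrow> ts!k < d \<longleftrightarrow> ts!Suc k \<le> d"
proof -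
  assume d: "d \<in> X" and k: "k < length ts - 1"
  obtain j where j: "j < length ts" "ts!j = d" using ts_idx d by blast
  show ?thesis using ts_less_iff[of k j] ts_le_iff[of "Suc k" j] j k by auto
qed

lemma grid_sum:
  assumes c: "c \<in> X"
  shows "(\<Sum>k<length ts - 1. (ts!Suc k - ts!k) * (if ts!Suc k \<le> c then 1 else 0)) = c"
proof -
  obtain j where j: "j < length ts" "ts!j = c" using ts_idx c by blast
  have "(\<Sum>k<length ts - 1. (ts!Suc k - ts!k) * (if ts!Suc k \<le> c then 1 else 0))
      = (\<Sum>k<length ts - 1. if k < j then ts!Suc k - ts!k else 0)"
    apply (rule sum.cong, simp)
    using ts_le_iff[of _ j] j by auto
  also have "\<dots> = (\<Sum>k\<in>{k\<in>{..<length ts - 1}. k < j}. ts!Suc k - ts!k)"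
    by (simp add: sum.inter_filter[symmetric])
  also have "{k\<in>{..<length ts - 1}. k < j} = {..<j}" using j by auto
  also have "(\<Sum>k<j. ts!Suc k - ts!k) = ts!j - ts!0" by (rule sum_lessThan_telescope)
  finally show ?thesis using j ts0 by simp
qed

lemma grid_weights_nonneg: "k < length ts - 1 \<Longrightarrow> 0 \<le> ts!Suc k - ts!k"
  using ts_le_iff[of k "Suc k"] by auto

lemma grid_weights_sum: "(\<Sum>k<length ts - 1. ts!Suc k - ts!k) = 1"
proof -
  have "(\<Sum>k<length ts - 1. (ts!Suc k - ts!k) * (if ts!Suc k \<le> 1 then 1 else 0)) = 1"
    using grid_sum X1 by blast
  moreover have "\<And>k. k < length ts - 1 \<Longrightarrow> ts!Suc k \<le> 1" using ts_range by auto
  ultimately show ?thesis by simp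
qed


end

lemma thresh:
  fixes E :: "('n::finite) set set" and a :: "'n set \<Rightarrow> real" and \<sigma> :: "'n \<Rightarrow> bool"
  assumes sg: "simple_graph E" and xb: "x \<in> unit_box"
  shows "(x, \<Sum>e\<in>E. a e * (if \<forall>i\<in>e. \<forall>j\<in>e. \<sigma> i = \<sigma> j then Min ((\<lambda>i. x$i) ` e)
            else max 0 ((\<Sum>i\<in>e. x$i) - 1))) \<in> convex hull graphB E a"
proof -
  define X where "X = {0,1} \<union> range (\<lambda>i. x$i) \<union> range (\<lambda>i. 1 - x$i)"
  have x01: "\<And>i. 0 \<le> x$i \<and> x$i \<le> 1" using xb by (simp add: unit_box_def)
  interpret grid X
    apply unfold_locales
    using x01 by (auto simp: X_def)
  define K where "K = {..<length ts - 1}"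
  define w where "w k = ts!Suc k - ts!k" for k
  define I where "I c k = (if ts!Suc k \<le> c then 1 else 0 :: real)" for c k
  define G where "G i k = (if \<sigma> i then I (x$i) k else 1 - I (1 - x$i) k)" for i k
  define v where "v k = (\<chi> i. G i k)" for k
  have S1: "c \<in> X \<Longrightarrow> (\<Sum>k\<in>K. w k * I c k) = c" for c
    using grid_sum unfolding K_def w_def I_def by blast
  have S0: "(\<Sum>k\<in>K. w k) = 1" using grid_weights_sum unfolding K_def w_def by blast
  have Im: "I c k * I d k = I (min c d) k" for c d k by (simp add: I_def)
  have Xmin: "c \<in> X \<Longrightarrow> d \<in> X \<Longrightarrow> min c d \<in> X" for c d by (simp add: min_def)
  have Xa: "x$i \<in> X" "1 - x$i \<in> X" for i by (auto simp: X_def)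
  have SG: "(\<Sum>k\<in>K. w k * G i k) = x$i" for i
  proof (cases "\<sigma> i")
    case True thus ?thesis using S1 Xa by (simp add: G_def)
  next
    case False
    have "(\<Sum>k\<in>K. w k * G i k) = (\<Sum>k\<in>K. w k) - (\<Sum>k\<in>K. w k * I (1 - x$i) k)"
      using False by (simp add: G_def algebra_simps sum_subtractf)
    thus ?thesis using S0 S1 Xa by simp
  qed
  have P: "(\<Sum>k\<in>K. w k * (G i k * G j k)) =
     (if \<sigma> i = \<sigma> j then min (x$i) (x$j) else max 0 (x$i + x$j - 1))" for i j
  proof -
    have A: "(\<Sum>k\<in>K. w k * (I c k * I d k)) = min c d" if "c \<in> X" "d \<in> X" for c d
      using S1 Xmin that by (simp add: Im)
    have B: "(\<Sum>k\<in>K. w k * (I c k * (1 - I d k))) = c - min c d" if "c \<in> X" "d \<in> X" for c d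
    proof -
      have "(\<Sum>k\<in>K. w k * (I c k * (1 - I d k))) = (\<Sum>k\<in>K. w k * I c k) - (\<Sum>k\<in>K. w k * (I c k * I d k))"
        by (simp add: algebra_simps sum_subtractf)
      thus ?thesis using A S1 that by simp
    qed
    have C: "(\<Sum>k\<in>K. w k * ((1 - I c k) * (1 - I d k))) = 1 - c - d + min c d" if "c \<in> X" "d \<in> X" for c d
    proof -
      have "(\<Sum>k\<in>K. w k * ((1 - I c k) * (1 - I d k))) = (\<Sum>k\<in>K. w k) - (\<Sum>k\<in>K. w k * I c k)
          - (\<Sum>k\<in>K. w k * I d k) + (\<Sum>k\<in>K. w k * (I c k * I d k))"
        by (simp add: algebra_simps sum_subtractf sum.distrib)
      thus ?thesis using A S1 S0 that by simp
    qed
    show ?thesis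
    proof (cases "\<sigma> i"; cases "\<sigma> j")
      assume "\<sigma> i" "\<sigma> j" thus ?thesis using A Xa by (simp add: G_def)
    next
      assume "\<sigma> i" "\<not> \<sigma> j" thus ?thesis using B[OF Xa(1) Xa(2)] by (simp add: G_def min_def max_def)
    next
      assume "\<not> \<sigma> i" "\<sigma> j"
      hence "(\<Sum>k\<in>K. w k * (G i k * G j k)) = (\<Sum>k\<in>K. w k * (I (x$j) k * (1 - I (1 - x$i) k)))"
        by (simp add: G_def mult.commute)
      thus ?thesis using B[OF Xa(1) Xa(2)] \<open>\<not> \<sigma> i\<close> \<open>\<sigma> j\<close> by (simp add: min_def max_def)
    next
      assume "\<not> \<sigma> i" "\<not> \<sigma> j" thus ?thesis using C[OF Xa(2) Xa(2)] by (simp add: G_def min_def max_def)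
    qed
  qed
  have G01: "G i k = 0 \<or> G i k = 1" for i k by (simp add: G_def I_def)
  have vB: "(v k, bilin E a (v k)) \<in> graphB E a" for k
  proof -
    have "0 \<le> G i k \<and> G i k \<le> 1" for i using G01[of i k] by auto
    hence "v k \<in> unit_box" unfolding unit_box_def v_def by simp
    thus ?thesis unfolding graphB_def by (simp only: mem_Collect_eq case_prod_conv)
  qed
  have fE: "finite E" by simp
  have e2: "\<exists>i j. e = {i,j} \<and> i \<noteq> j" if "e \<in> E" for e
    using sg that by (simp add: simple_graph_def card_2_iff)
  have sumeq: "(\<Sum>k\<in>K. w k *\<^sub>R (v k, bilin E a (v k))) =
     (x, \<Sum>e\<in>E. a e * (if \<forall>i\<in>e. \<forall>j\<in>e. \<sigma> i = \<sigma> j then Min ((\<lambda>i. x$i) ` e)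
            else max 0 ((\<Sum>i\<in>e. x$i) - 1)))"
  proof (rule prod_eqI)
    show "fst (\<Sum>k\<in>K. w k *\<^sub>R (v k, bilin E a (v k))) = fst (x, \<Sum>e\<in>E. a e * (if \<forall>i\<in>e. \<forall>j\<in>e. \<sigma> i = \<sigma> j then Min ((\<lambda>i. x$i) ` e)
            else max 0 ((\<Sum>i\<in>e. x$i) - 1)))"
      by (simp add: fst_sum vec_eq_iff sum_component v_def SG)
  next
    have "snd (\<Sum>k\<in>K. w k *\<^sub>R (v k, bilin E a (v k))) = (\<Sum>k\<in>K. w k * (\<Sum>e\<in>E. a e * (\<Prod>i\<in>e. v k $ i)))"
      by (simp add: snd_sum bilin_def)
    also have "\<dots> = (\<Sum>e\<in>E. a e * (\<Sum>k\<in>K. w k * (\<Prod>i\<in>e. v k $ i)))"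
    proof -
      have "(\<Sum>k\<in>K. w k * (\<Sum>e\<in>E. a e * (\<Prod>i\<in>e. v k $ i))) = (\<Sum>k\<in>K. \<Sum>e\<in>E. a e * (w k * (\<Prod>i\<in>e. v k $ i)))"
        by (simp add: sum_distrib_left mult.left_commute)
      also have "\<dots> = (\<Sum>e\<in>E. \<Sum>k\<in>K. a e * (w k * (\<Prod>i\<in>e. v k $ i)))"
        by (rule sum.swap)
      also have "\<dots> = (\<Sum>e\<in>E. a e * (\<Sum>k\<in>K. w k * (\<Prod>i\<in>e. v k $ i)))"
        by (simp add: sum_distrib_left)
      finally show ?thesis .
    qed
    also have "\<dots> = (\<Sum>e\<in>E. a e * (if \<forall>i\<in>e. \<forall>j\<in>e. \<sigma> i = \<sigma> j then Min ((\<lambda>i. x$i) ` e)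
            else max 0 ((\<Sum>i\<in>e. x$i) - 1)))"
    proof (rule sum.cong[OF refl])
      fix e assume "e \<in> E"
      then obtain i j where ij: "e = {i,j}" "i \<noteq> j" using e2 by blast
      have "(\<Sum>k\<in>K. w k * (\<Prod>i\<in>e. v k $ i)) = (\<Sum>k\<in>K. w k * (G i k * G j k))"
        using ij by (simp add: v_def)
      also have "\<dots> = (if \<forall>i\<in>e. \<forall>j\<in>e. \<sigma> i = \<sigma> j then Min ((\<lambda>i. x$i) ` e)
            else max 0 ((\<Sum>i\<in>e. x$i) - 1))"
      proof -
        have q1: "(\<forall>l\<in>e. \<forall>m\<in>e. \<sigma> l = \<sigma> m) = (\<sigma> i = \<sigma> j)" using ij by auto
        have q2: "Min ((\<lambda>i. x$i) ` e) = min (x$i) (x$j)" using ij by simp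
        have q3: "(\<Sum>l\<in>e. x$l) = x$i + x$j" using ij by simp
        show ?thesis unfolding q1 q2 q3 by (rule P)
      qed
      finally show "a e * (\<Sum>k\<in>K. w k * (\<Prod>i\<in>e. v k $ i)) = a e * (if \<forall>i\<in>e. \<forall>j\<in>e. \<sigma> i = \<sigma> j then Min ((\<lambda>i. x$i) ` e)
            else max 0 ((\<Sum>i\<in>e. x$i) - 1))" by simp
    qed
    finally show "snd (\<Sum>k\<in>K. w k *\<^sub>R (v k, bilin E a (v k))) = snd (x, \<Sum>e\<in>E. a e * (if \<forall>i\<in>e. \<forall>j\<in>e. \<sigma> i = \<sigma> j then Min ((\<lambda>i. x$i) ` e)
            else max 0 ((\<Sum>i\<in>e. x$i) - 1)))" by simp
  qed
  have "(\<Sum>k\<in>K. w k *\<^sub>R (v k, bilin E a (v k))) \<in> convex hull graphB E a"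
  proof (rule convex_sum)
    show "finite K" by (simp add: K_def)
    show "convex (convex hull graphB E a)" by (rule convex_convex_hull)
    show "sum w K = 1" by (rule S0)
    show "0 \<le> w k" if "k \<in> K" for k using grid_weights_nonneg that unfolding K_def w_def by blast
    show "(v k, bilin E a (v k)) \<in> convex hull graphB E a" if "k \<in> K" for k
      using vB[of k] by (rule hull_inc)
  qed
  thus ?thesis using sumeq by simp
qed



definition ce :: "'n list \<Rightarrow> nat \<Rightarrow> 'n set" where
  "ce vs i = {vs!i, vs!((i+1) mod length vs)}"

lemma suc_mod: "i < (L::nat) \<Longrightarrow> (i+1) mod L = (if i+1 < L then i+1 else 0)"
  by (metis Suc_eq_plus1 Suc_lessI mod_less mod_self)

lemma ce_inj:
  assumes "is_cycle E vs" "i < length vs" "j < length vs" "ce vs i = ce vs j"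
  shows "i = j"
proof -
  let ?L = "length vs"
  have L: "?L \<ge> 3" and d: "distinct vs" using assms(1) by (auto simp: is_cycle_def)
  define ni where "ni = (if i+1 < ?L then i+1 else 0)"
  define nj where "nj = (if j+1 < ?L then j+1 else 0)"
  have ei: "(i+1) mod ?L = ni" "(j+1) mod ?L = nj" using suc_mod assms(2,3) by (auto simp: ni_def nj_def)
  have mi: "ni < ?L" "nj < ?L" using L by (auto simp: ni_def nj_def)
  have "{vs!i, vs!ni} = {vs!j, vs!nj}" using assms(4) unfolding ce_def ei .
  hence "vs!i = vs!j \<and> vs!ni = vs!nj \<or> vs!i = vs!nj \<and> vs!ni = vs!j"
    by (simp add: doubleton_eq_iff)
  hence "i = j \<or> (i = nj \<and> ni = j)"
    using nth_eq_iff_index_eq[OF d] assms(2,3) mi by metis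
  moreover have "\<not> (i = nj \<and> ni = j)"
    using L assms(2,3) by (auto simp: ni_def nj_def split: if_splits)
  ultimately show ?thesis by blast
qed

lemma cycle_edges_ce: "cycle_edges vs = ce vs ` {..<length vs}"
  by (auto simp: cycle_edges_def ce_def)

lemma card_cycle:
  assumes "is_cycle E vs"
  shows "card {e \<in> cycle_edges vs. P e} = card {i. i < length vs \<and> P (ce vs i)}"
proof -
  have "{e \<in> cycle_edges vs. P e} = ce vs ` {i. i < length vs \<and> P (ce vs i)}"
    by (auto simp: cycle_edges_ce)
  moreover have "inj_on (ce vs) {i. i < length vs \<and> P (ce vs i)}"
    using ce_inj[OF assms] by (auto simp: inj_on_def)
  ultimately show ?thesis by (simp add: card_image)
qed

lemma card_less_Suc:
  "card {i. i < Suc k \<and> P i} = card {i. i < k \<and> P i} + (if P k then 1 else 0)"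
proof -
  have "{i. i < Suc k \<and> P i} = (if P k then insert k {i. i < k \<and> P i} else {i. i < k \<and> P i})"
    by (auto simp: less_Suc_eq)
  thus ?thesis by simp
qed

lemma walk_parity:
  fixes f :: "'a \<Rightarrow> bool"
  assumes "0 < length vs" "k \<le> length vs"
    and "\<forall>i<k. (f (vs!i) \<noteq> f (vs!((i+1) mod length vs))) = l i"
  shows "(f (vs!(k mod length vs)) = f (vs!0)) = even (card {i. i < k \<and> l i})"
  using assms(2,3)
proof (induction k)
  case 0 thus ?case by simp
next
  case (Suc k)
  have k: "k < length vs" using Suc by simp
  have pk: "\<forall>i<k. (f (vs!i) \<noteq> f (vs!((i+1) mod length vs))) = l i" using Suc.prems(2) by auto
  have IH: "(f (vs!k) = f (vs!0)) = even (card {i. i < k \<and> l i})"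
    using Suc.IH[OF _ pk] k by simp
  have st: "(f (vs!k) \<noteq> f (vs!(Suc k mod length vs))) = l k" using Suc by simp
  have E: "even (card {i. i<Suc k \<and> l i}) = (even (card {i. i<k \<and> l i}) = (\<not> l k))"
    by (simp add: card_less_Suc)
  show ?case unfolding E IH[symmetric] st[symmetric]
    by (cases "f (vs ! k)"; cases "f (vs ! 0)"; cases "f (vs ! (Suc k mod length vs))"; simp)
qed

lemma cycle_parity:
  fixes f :: "'a \<Rightarrow> bool"
  assumes "is_cycle E vs"
    and "\<forall>i<length vs. (f (vs!i) \<noteq> f (vs!((i+1) mod length vs))) = l i"
  shows "even (card {i. i < length vs \<and> l i})"
proof -
  have "0 < length vs" using assms(1) by (auto simp: is_cycle_def)
  from walk_parity[OF this le_refl assms(2)] show ?thesis by simp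
qed

lemma rtrancl_path:
  assumes "(u, v) \<in> R\<^sup>*"
  shows "\<exists>ps. ps \<noteq> [] \<and> hd ps = u \<and> last ps = v \<and> distinct ps \<and> successively (\<lambda>p q. (p,q) \<in> R) ps"
  using assms
proof (induction rule: rtrancl_induct)
  case base
  show ?case by (rule exI[of _ "[u]"]) simp
next
  case (step y z)
  then obtain ps where ps: "ps \<noteq> []" "hd ps = u" "last ps = y" "distinct ps"
    "successively (\<lambda>p q. (p,q) \<in> R) ps" by blast
  show ?case
  proof (cases "z \<in> set ps")
    case True
    then obtain xs ys where sp: "ps = xs @ z # ys" by (meson split_list)
    have "successively (\<lambda>p q. (p,q) \<in> R) ((xs @ [z]) @ ys)" using ps(5) sp by simp
    hence "successively (\<lambda>p q. (p,q) \<in> R) (xs @ [z])" by (simp only: successively_append_iff)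
    moreover have "hd (xs @ [z]) = u" using ps(2) sp by (cases xs) auto
    moreover have "distinct (xs @ [z])" using ps(4) sp by simp
    ultimately show ?thesis by (intro exI[of _ "xs @ [z]"]) simp
  next
    case False
    have "successively (\<lambda>p q. (p,q) \<in> R) (ps @ [z])"
      using ps step(2) by (simp add: successively_append_iff)
    moreover have "hd (ps @ [z]) = u" using ps by simp
    ultimately show ?thesis using ps False by (intro exI[of _ "ps @ [z]"]) simp
  qed
qed

lemma is_cycle_mono: "is_cycle F vs \<Longrightarrow> F \<subseteq> F' \<Longrightarrow> is_cycle F' vs"
  by (auto simp: is_cycle_def)

lemma balanced_aux:
  fixes F :: "('n::finite) set set"
  shows "finite F \<Longrightarrow> simple_graph F \<Longrightarrow>
    (\<forall>vs. is_cycle F vs \<longrightarrow> even (card {e\<in>cycle_edges vs. l e})) \<Longrightarrow>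
    \<exists>\<sigma>::'n\<Rightarrow>bool. \<forall>e\<in>F. \<forall>i\<in>e. \<forall>j\<in>e. i \<noteq> j \<longrightarrow> (\<sigma> i \<noteq> \<sigma> j) = l e"
proof (induction F rule: finite_induct)
  case empty thus ?case by simp
next
  case (insert e F)
  have sgF: "simple_graph F" using insert.prems(1) by (simp add: simple_graph_def)
  have cycF: "\<forall>vs. is_cycle F vs \<longrightarrow> even (card {e\<in>cycle_edges vs. l e})"
  proof (intro allI impI)
    fix vs assume "is_cycle F vs"
    hence "is_cycle (insert e F) vs" by (rule is_cycle_mono[OF _ subset_insertI])
    thus "even (card {e\<in>cycle_edges vs. l e})" using insert.prems(2) by simp
  qed
  from insert.IH[OF sgF cycF] obtain \<sigma> :: "'n \<Rightarrow> bool" where \<sigma>: "\<forall>e\<in>F. \<forall>i\<in>e. \<forall>j\<in>e. i \<noteq> j \<longrightarrow> (\<sigma> i \<noteq> \<sigma> j) = l e"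
    ..
  have "card e = 2" using insert.prems(1) by (simp add: simple_graph_def)
  then obtain u v where uv: "e = {u,v}" "u \<noteq> v"
    by (auto simp only: card_2_iff)
  show ?case
  proof (cases "(\<sigma> u \<noteq> \<sigma> v) = l e")
    case True
    show ?thesis
    proof (rule exI[of _ \<sigma>], intro ballI impI)
      fix e' i j assume h: "e' \<in> insert e F" "i \<in> e'" "j \<in> e'" "i \<noteq> j"
      show "(\<sigma> i \<noteq> \<sigma> j) = l e'"
      proof (cases "e' = e")
        case ee: True
        hence "(i = u \<and> j = v) \<or> (i = v \<and> j = u)" using h uv by auto
        thus ?thesis using True ee by auto
      next
        case False
        hence "e' \<in> F" using h(1) by simp
        thus ?thesis using \<sigma> h(2-4) by blast
      qed
    qed
  next
    case bad: False
    define R where "R = {(p,q). {p,q} \<in> F}"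
    define C where "C = {w. (u,w) \<in> R\<^sup>*}"
    have symR: "(p,q) \<in> R \<Longrightarrow> (q,p) \<in> R" for p q by (auto simp: R_def insert_commute)
    show ?thesis
    proof (cases "v \<in> C")
      case True
      then obtain ps where ps: "ps \<noteq> []" "hd ps = u" "last ps = v" "distinct ps"
        "successively (\<lambda>p q. (p,q) \<in> R) ps"
        using rtrancl_path[of u v R] by (auto simp: C_def)
      define L where "L = length ps"
      have p0: "ps!0 = u" using ps by (simp add: hd_conv_nth)
      have pL: "ps!(L-1) = v" using ps by (simp add: L_def last_conv_nth)
      have L2: "L \<ge> 2"
      proof (rule ccontr)
        assume "\<not> L \<ge> 2"
        moreover have "L \<noteq> 0" using ps(1) by (simp add: L_def)
        ultimately have "L = 1" by linarith
        thus False using p0 pL uv by simp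
      qed
      have edgeF: "Suc i < L \<Longrightarrow> {ps!i, ps!Suc i} \<in> F" for i
        using successively_nth[OF ps(5)] by (auto simp: R_def L_def)
      have L3: "L \<ge> 3"
      proof (rule ccontr)
        assume "\<not> L \<ge> 3"
        hence "L = 2" using L2 by simp
        hence "{ps!0, ps!1} \<in> F" using edgeF[of 0] by simp
        moreover have "ps!1 = v" using pL \<open>L = 2\<close> by simp
        ultimately show False using p0 uv insert.hyps(2) by simp
      qed
      have m0: "((L-1)+1) mod length ps = 0"
      proof -
        have "L-1+1 = length ps" using L3 by (simp add: L_def)
        thus ?thesis by simp
      qed
      have "ce ps (L-1) = {ps!(L-1), ps!0}" unfolding ce_def m0 ..
      hence ceL: "ce ps (L-1) = e" unfolding pL p0 uv by (metis insert_commute)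
      have ceF: "ce ps i \<in> F" if i: "i < L - 1" for i
      proof -
        have mm: "(i+1) mod length ps = Suc i" using i by (simp add: L_def)
        show ?thesis unfolding ce_def mm using edgeF[of i] i by simp
      qed
      have cyc: "is_cycle (insert e F) ps"
        unfolding is_cycle_def
      proof (intro conjI allI impI)
        show "3 \<le> length ps" using L3 by (simp add: L_def)
        show "distinct ps" by (rule ps(4))
        fix i assume i: "i < length ps"
        have ci: "{ps ! i, ps ! ((i + 1) mod length ps)} = ce ps i" unfolding ce_def ..
        show "{ps ! i, ps ! ((i + 1) mod length ps)} \<in> insert e F"
        proof (cases "i = L - 1")
          case True
          have "ce ps i = e" unfolding True by (rule ceL)
          thus ?thesis unfolding ci by (rule ssubst) (rule insertI1)
        next
          case False hence "i < L - 1" using i unfolding L_def by linarith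
          thus ?thesis unfolding ci using ceF by blast
        qed
      qed
      have ev: "even (card {i. i < L \<and> l (ce ps i)})"
        using insert.prems(2) cyc card_cycle[OF cyc, of l] unfolding L_def by metis
      have cons: "\<forall>i<L-1. (\<sigma> (ps!i) \<noteq> \<sigma> (ps!((i+1) mod length ps))) = l (ce ps i)"
      proof (intro allI impI)
        fix i assume i: "i < L - 1"
        have m: "(i+1) mod length ps = Suc i" using i by (simp add: L_def)
        have ne: "ps!i \<noteq> ps!Suc i" using ps(4) i nth_eq_iff_index_eq[OF ps(4), of i "Suc i"]
          by (simp add: L_def)
        show "(\<sigma> (ps!i) \<noteq> \<sigma> (ps!((i+1) mod length ps))) = l (ce ps i)"
          using \<sigma> ceF[OF i] ne m by (auto simp: ce_def)
      qed
      have wp: "(\<sigma> (ps!((L-1) mod length ps)) = \<sigma> (ps!0)) = even (card {i. i < L-1 \<and> l (ce ps i)})"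
        using walk_parity[of ps "L-1" \<sigma> "\<lambda>i. l (ce ps i)"] cons ps(1) by (simp add: L_def)
      have "card {i. i < L \<and> l (ce ps i)} = card {i. i < L-1 \<and> l (ce ps i)} + (if l (ce ps (L-1)) then 1 else 0)"
        using card_less_Suc[of "L-1" "\<lambda>i. l (ce ps i)"] L3 by simp
      hence False using ev wp ceL bad pL p0 L3 by (auto simp: L_def)
      thus ?thesis ..
    next
      case False
      define \<sigma>' :: "'n \<Rightarrow> bool" where "\<sigma>' w = (\<sigma> w \<noteq> (w \<in> C))" for w
      have uC: "u \<in> C" by (simp add: C_def)
      have closed: "{p,q} \<in> F \<Longrightarrow> p \<in> C \<longleftrightarrow> q \<in> C" for p q
      proof -
        assume pq: "{p,q} \<in> F"
        hence "(p,q) \<in> R" "(q,p) \<in> R" by (auto simp: R_def insert_commute)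
        thus ?thesis by (auto simp: C_def intro: rtrancl_into_rtrancl)
      qed
      show ?thesis
      proof (rule exI[of _ \<sigma>'], intro ballI impI)
        fix e' i j assume h: "e' \<in> insert e F" "i \<in> e'" "j \<in> e'" "i \<noteq> j"
        show "(\<sigma>' i \<noteq> \<sigma>' j) = l e'"
        proof (cases "e' = e")
          case True
          thus ?thesis using h uv bad uC False by (auto simp: \<sigma>'_def)
        next
          case ne: False
          hence eF: "e' \<in> F" using h by simp
          have "e' = {i,j}" using insert.prems(1) h eF
            by (auto simp: simple_graph_def card_2_iff)
          hence "i \<in> C \<longleftrightarrow> j \<in> C" using closed eF by blast
          thus ?thesis using \<sigma> eF h by (auto simp: \<sigma>'_def)
        qed
      qed
    qed
  qed
qed

lemma balanced:
  fixes F :: "('n::finite) set set"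
  assumes "simple_graph F" "\<forall>vs. is_cycle F vs \<longrightarrow> even (card {e\<in>cycle_edges vs. l e})"
  shows "\<exists>\<sigma>::'n\<Rightarrow>bool. \<forall>e\<in>F. \<forall>i\<in>e. \<forall>j\<in>e. i \<noteq> j \<longrightarrow> (\<sigma> i \<noteq> \<sigma> j) = l e"
  using balanced_aux[OF _ assms] by simp



lemma edge_bounds:
  fixes c y xi xj :: real
  assumes "y \<le> xi" "y \<le> xj" "xi + xj - 1 \<le> y" "0 \<le> y"
  shows "c > 0 \<Longrightarrow> c * y \<le> c * min xi xj"
    and "c < 0 \<Longrightarrow> c * y \<le> c * max 0 (xi + xj - 1)"
    and "c > 0 \<Longrightarrow> c * max 0 (xi + xj - 1) \<le> c * y"
    and "c < 0 \<Longrightarrow> c * min xi xj \<le> c * y"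
proof -
  have m1: "y \<le> min xi xj" using assms by simp
  have m2: "max 0 (xi + xj - 1) \<le> y" using assms by simp
  show "c > 0 \<Longrightarrow> c * y \<le> c * min xi xj" using m1 by (simp add: mult_left_mono)
  show "c < 0 \<Longrightarrow> c * y \<le> c * max 0 (xi + xj - 1)" using m2 by (simp add: mult_left_mono_neg)
  show "c > 0 \<Longrightarrow> c * max 0 (xi + xj - 1) \<le> c * y" using m2 by (simp add: mult_left_mono)
  show "c < 0 \<Longrightarrow> c * min xi xj \<le> c * y" using m1 by (simp add: mult_left_mono_neg)
qed

lemma edge2: "simple_graph E \<Longrightarrow> e \<in> E \<Longrightarrow> \<exists>i j. e = {i,j} \<and> i \<noteq> j"
  by (simp add: simple_graph_def card_2_iff)

lemma Q_convex: "convex (mccormickQ E a)"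
proof (rule convexI)
  fix p q :: "(real^'a) \<times> real" and s t :: real
  assume p: "p \<in> mccormickQ E a" and q: "q \<in> mccormickQ E a" and st: "0 \<le> s" "0 \<le> t" "s + t = 1"
  obtain x1 z1 where p': "p = (x1, z1)" by (cases p)
  obtain x2 z2 where q': "q = (x2, z2)" by (cases q)
  from p obtain y1 where y1: "(x1, y1) \<in> mccormickP E" "z1 = (\<Sum>e\<in>E. a e * y1 e)"
    by (auto simp: mccormickQ_def p')
  from q obtain y2 where y2: "(x2, y2) \<in> mccormickP E" "z2 = (\<Sum>e\<in>E. a e * y2 e)"
    by (auto simp: mccormickQ_def q')
  define x where "x = s *\<^sub>R x1 + t *\<^sub>R x2"
  define y where "y e = s * y1 e + t * y2 e" for e
  have xc: "x $ i = s * x1 $ i + t * x2 $ i" for i by (simp add: x_def)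
  have A1: "\<forall>i. 0 \<le> x1$i \<and> x1$i \<le> 1" "\<forall>i. 0 \<le> x2$i \<and> x2$i \<le> 1"
    using y1(1) y2(1) by (auto simp: mccormickP_def unit_box_def)
  have cvx: "a1 \<le> b1 \<Longrightarrow> a2 \<le> b2 \<Longrightarrow> s * a1 + t * a2 \<le> s * b1 + t * b2" for a1 a2 b1 b2 :: real
    using st by (simp add: add_mono mult_left_mono)
  have xb: "x \<in> unit_box" unfolding unit_box_def
  proof (intro CollectI allI conjI)
    fix i
    show "0 \<le> x$i" unfolding xc using cvx[of 0 "x1$i" 0 "x2$i"] A1 by auto
    show "x$i \<le> 1" unfolding xc using cvx[of "x1$i" 1 "x2$i" 1] A1 st by auto
  qed
  have Pe: "0 \<le> y e \<and> y e \<le> 1 \<and> (\<forall>i\<in>e. y e \<le> x$i) \<and>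
        (\<forall>i\<in>e. \<forall>j\<in>e. i \<noteq> j \<longrightarrow> x$i + x$j - 1 \<le> y e)" if e: "e \<in> E" for e
  proof -
    have B1: "0 \<le> y1 e \<and> y1 e \<le> 1 \<and> (\<forall>i\<in>e. y1 e \<le> x1$i) \<and> (\<forall>i\<in>e. \<forall>j\<in>e. i \<noteq> j \<longrightarrow> x1$i + x1$j - 1 \<le> y1 e)"
      using y1(1) e by (auto simp: mccormickP_def)
    have B2: "0 \<le> y2 e \<and> y2 e \<le> 1 \<and> (\<forall>i\<in>e. y2 e \<le> x2$i) \<and> (\<forall>i\<in>e. \<forall>j\<in>e. i \<noteq> j \<longrightarrow> x2$i + x2$j - 1 \<le> y2 e)"
      using y2(1) e by (auto simp: mccormickP_def)
    have c1: "0 \<le> y e" unfolding y_def using cvx[of 0 "y1 e" 0 "y2 e"] B1 B2 by auto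
    have c2: "y e \<le> 1" unfolding y_def using cvx[of "y1 e" 1 "y2 e" 1] B1 B2 st by auto
    have c3: "\<forall>i\<in>e. y e \<le> x$i"
    proof
      fix i assume "i \<in> e"
      thus "y e \<le> x$i" unfolding y_def xc using cvx[of "y1 e" "x1$i" "y2 e" "x2$i"] B1 B2 by simp
    qed
    have c4: "\<forall>i\<in>e. \<forall>j\<in>e. i \<noteq> j \<longrightarrow> x$i + x$j - 1 \<le> y e"
    proof (intro ballI impI)
      fix i j assume "i \<in> e" "j \<in> e" "i \<noteq> j"
      hence "s * (x1$i + x1$j - 1) + t * (x2$i + x2$j - 1) \<le> s * y1 e + t * y2 e"
        using cvx[of "x1$i + x1$j - 1" "y1 e" "x2$i + x2$j - 1" "y2 e"] B1 B2 by simp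
      thus "x$i + x$j - 1 \<le> y e" unfolding y_def xc using st by (simp add: algebra_simps)
    qed
    show ?thesis using c1 c2 c3 c4 by blast
  qed
  have P: "(x, y) \<in> mccormickP E" unfolding mccormickP_def using xb Pe by blast
  have z: "s * z1 + t * z2 = (\<Sum>e\<in>E. a e * y e)"
    by (simp add: y1(2) y2(2) y_def sum_distrib_left sum.distrib algebra_simps)
  show "s *\<^sub>R p + t *\<^sub>R q \<in> mccormickQ E a"
    unfolding p' q' mccormickQ_def using xb P z by (auto simp: x_def)
qed

lemma B_sub_Q:
  assumes sg: "simple_graph E"
  shows "graphB E a \<subseteq> mccormickQ E a"
proof
  fix p assume p: "p \<in> graphB E a"
  obtain x z where p': "p = (x, z)" by (cases p)
  have xb: "x \<in> unit_box" and z: "z = bilin E a x" using p by (auto simp: graphB_def p')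
  have x01: "0 \<le> x$i \<and> x$i \<le> 1" for i using xb by (simp add: unit_box_def)
  define y where "y e = (\<Prod>i\<in>e. x$i)" for e
  have Pe: "0 \<le> y e \<and> y e \<le> 1 \<and> (\<forall>i\<in>e. y e \<le> x$i) \<and>
        (\<forall>i\<in>e. \<forall>j\<in>e. i \<noteq> j \<longrightarrow> x$i + x$j - 1 \<le> y e)" if e: "e \<in> E" for e
  proof -
    obtain i j where ij: "e = {i,j}" "i \<noteq> j" using edge2[OF sg e] by blast
    have ye: "y e = x$i * x$j" using ij by (simp add: y_def)
    have xi: "0 \<le> x$i" "x$i \<le> 1" "0 \<le> x$j" "x$j \<le> 1" using x01 by auto
    have c1: "0 \<le> y e" unfolding ye using xi by simp
    have c2: "y e \<le> 1" unfolding ye using xi by (simp add: mult_le_one)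
    have "x$i * x$j \<le> x$i" "x$i * x$j \<le> x$j" using xi by (simp_all add: mult_left_le mult_left_le_one_le)
    hence c3: "\<forall>k\<in>e. y e \<le> x$k" using ij ye by auto
    have "x$i + x$j - 1 \<le> x$i * x$j"
    proof -
      have "0 \<le> (1 - x$i) * (1 - x$j)" using xi by simp
      thus ?thesis by (simp add: algebra_simps)
    qed
    hence c4: "\<forall>k\<in>e. \<forall>l\<in>e. k \<noteq> l \<longrightarrow> x$k + x$l - 1 \<le> y e"
      using ij ye by (auto simp: add.commute)
    show ?thesis using c1 c2 c3 c4 by blast
  qed
  have "(x, y) \<in> mccormickP E" unfolding mccormickP_def using xb Pe by blast
  moreover have "z = (\<Sum>e\<in>E. a e * y e)" by (simp add: z bilin_def y_def)
  ultimately show "p \<in> mccormickQ E a" using xb by (auto simp: mccormickQ_def p')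
qed



lemma sum_zero_nonneg:
  fixes f :: "'a \<Rightarrow> real"
  assumes "finite S" "\<forall>p\<in>S. 0 \<le> f p" "(\<Sum>p\<in>S. f p) = 0"
  shows "\<forall>p\<in>S. f p = 0"
  using assms sum_nonneg_eq_0_iff by blast

lemma core:
  fixes E :: "('n::finite) set set" and a :: "'n set \<Rightarrow> real"
  assumes sg: "simple_graph E" and nz: "\<forall>e\<in>E. a e \<noteq> 0"
    and mem: "((\<chi> i. 1/2) :: real^'n, \<Sum>e\<in>E. if a e > 0 then a e / 2 else 0) \<in> convex hull graphB E a"
  shows "\<forall>vs. is_cycle E vs \<longrightarrow> even (card {e\<in>cycle_edges vs. a e < 0})"
proof -
  define h :: "real^'n" where "h = (\<chi> i. 1/2)"
  define Z where "Z = (\<Sum>e\<in>E. if a e > 0 then a e / 2 else 0)"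
  from mem obtain S u where S: "finite S" "S \<subseteq> graphB E a" "\<forall>p\<in>S. 0 \<le> u p" "sum u S = 1"
      "(\<Sum>p\<in>S. u p *\<^sub>R p) = (h, Z)"
    unfolding convex_hull_explicit h_def Z_def by blast
  define X :: "(real^'n) \<times> real \<Rightarrow> 'n \<Rightarrow> real" where "X p i = fst p $ i" for p i
  have pS: "fst p \<in> unit_box \<and> snd p = bilin E a (fst p)" if "p \<in> S" for p
    using S(2) that by (auto simp: graphB_def)
  have X01: "0 \<le> X p i \<and> X p i \<le> 1" if "p \<in> S" for p i
    using pS[OF that] by (simp add: X_def unit_box_def)
  have fstS: "(\<Sum>p\<in>S. u p * X p i) = 1/2" for i
  proof -
    have "fst (\<Sum>p\<in>S. u p *\<^sub>R p) $ i = h $ i" using S(5) by simp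
    thus ?thesis by (simp add: fst_sum sum_component X_def h_def)
  qed
  have sndS: "(\<Sum>p\<in>S. u p * snd p) = Z"
  proof -
    have "snd (\<Sum>p\<in>S. u p *\<^sub>R p) = Z" using S(5) by simp
    thus ?thesis by (simp add: snd_sum)
  qed
  define D where "D e = (\<Sum>p\<in>S. u p * (a e * (\<Prod>i\<in>e. X p i)))" for e
  define c where "c e = (if a e > 0 then a e / 2 else 0)" for e
  have sumD: "(\<Sum>e\<in>E. D e) = (\<Sum>e\<in>E. c e)"
  proof -
    have "(\<Sum>e\<in>E. D e) = (\<Sum>p\<in>S. \<Sum>e\<in>E. u p * (a e * (\<Prod>i\<in>e. X p i)))"
      unfolding D_def by (rule sum.swap)
    also have "\<dots> = (\<Sum>p\<in>S. u p * snd p)"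
    proof (rule sum.cong[OF refl])
      fix p assume "p \<in> S"
      hence "snd p = (\<Sum>e\<in>E. a e * (\<Prod>i\<in>e. X p i))" using pS by (simp add: bilin_def X_def)
      thus "(\<Sum>e\<in>E. u p * (a e * (\<Prod>i\<in>e. X p i))) = u p * snd p" by (simp add: sum_distrib_left)
    qed
    also have "\<dots> = (\<Sum>e\<in>E. c e)" using sndS by (simp add: Z_def c_def)
    finally show ?thesis .
  qed
  have prod2: "(\<Prod>k\<in>e. X p k) = X p i * X p j" if "e = {i,j}" "i \<noteq> j" for e i j p
    using that by simp
  have Dle: "D e \<le> c e" if e: "e \<in> E" for e
  proof -
    obtain i j where ij: "e = {i,j}" "i \<noteq> j" using edge2[OF sg e] by blast
    have De: "D e = a e * (\<Sum>p\<in>S. u p * (X p i * X p j))"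
      unfolding D_def prod2[OF ij] by (simp add: sum_distrib_left algebra_simps)
    show ?thesis
    proof (cases "a e > 0")
      case True
      have "(\<Sum>p\<in>S. u p * (X p i * X p j)) \<le> (\<Sum>p\<in>S. u p * X p i)"
      proof (rule sum_mono)
        fix p assume "p \<in> S"
        hence "X p i * X p j \<le> X p i" "0 \<le> u p" using X01 S(3) by (auto simp: mult_left_le)
        thus "u p * (X p i * X p j) \<le> u p * X p i" by (simp add: mult_left_mono)
      qed
      hence "a e * (\<Sum>p\<in>S. u p * (X p i * X p j)) \<le> a e * (1/2)" using True fstS[of i]
        by (simp add: mult_left_mono)
      thus ?thesis using True De by (simp add: c_def)
    next
      case False
      have "0 \<le> (\<Sum>p\<in>S. u p * (X p i * X p j))"
        using X01 S(3) by (intro sum_nonneg) simp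
      hence "a e * (\<Sum>p\<in>S. u p * (X p i * X p j)) \<le> 0" using False
        by (simp add: mult_nonpos_nonneg)
      thus ?thesis using False De by (simp add: c_def)
    qed
  qed
  have Deq: "D e = c e" if e: "e \<in> E" for e
  proof -
    have "\<forall>e\<in>E. c e - D e = 0"
      by (rule sum_zero_nonneg) (use Dle sumD in \<open>auto simp: sum_subtractf\<close>)
    thus ?thesis using e by simp
  qed
  obtain p0 where p0: "p0 \<in> S" "u p0 > 0"
  proof -
    have "\<exists>p\<in>S. u p > 0"
    proof (rule ccontr)
      assume "\<not> (\<exists>p\<in>S. u p > 0)"
      hence "sum u S \<le> 0" by (intro sum_nonpos) (simp add: not_less)
      thus False using S(4) by simp
    qed
    thus ?thesis using that by blast
  qed
  define y where "y i = X p0 i" for i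
  have y01: "0 \<le> y i \<and> y i \<le> 1" for i using X01[OF p0(1)] by (simp add: y_def)
  have edgefact: "(a e > 0 \<longrightarrow> y i = y i * y j \<and> y j = y i * y j) \<and>
      (a e < 0 \<longrightarrow> y i * y j = 0 \<and> 1 - y i - y j + y i * y j = 0)"
    if e: "e \<in> E" and ij: "e = {i,j}" "i \<noteq> j" for e i j
  proof -
    have De: "D e = a e * (\<Sum>p\<in>S. u p * (X p i * X p j))"
      unfolding D_def prod2[OF ij] by (simp add: sum_distrib_left algebra_simps)
    show ?thesis
    proof (intro conjI impI)
      assume pos: "a e > 0"
      have s1: "(\<Sum>p\<in>S. u p * (X p i * X p j)) = 1/2"
        using Deq[OF e] De pos by (simp add: c_def)
      have g: "\<forall>p\<in>S. u p * (X p k - X p i * X p j) = 0" if "k = i \<or> k = j" for k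
      proof (rule sum_zero_nonneg[OF S(1)])
        show "\<forall>p\<in>S. 0 \<le> u p * (X p k - X p i * X p j)"
        proof
          fix p assume "p \<in> S"
          hence a1: "0 \<le> X p i \<and> X p i \<le> 1" "0 \<le> X p j \<and> X p j \<le> 1" "0 \<le> u p"
            using X01 S(3) by auto
          have "X p i * X p j \<le> X p i" "X p i * X p j \<le> X p j" using a1
            by (simp_all add: mult_left_le mult_left_le_one_le)
          hence "X p i * X p j \<le> X p k" "0 \<le> u p" using that a1 by auto
          thus "0 \<le> u p * (X p k - X p i * X p j)" by simp
        qed
        show "(\<Sum>p\<in>S. u p * (X p k - X p i * X p j)) = 0"
          using s1 fstS[of k] by (simp add: right_diff_distrib sum_subtractf)
      qed
      have "u p0 * (X p0 i - X p0 i * X p0 j) = 0" using g[of i] p0(1) by blast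
      hence "X p0 i - X p0 i * X p0 j = 0" using p0(2) by simp
      thus "y i = y i * y j" by (simp add: y_def)
      have "u p0 * (X p0 j - X p0 i * X p0 j) = 0" using g[of j] p0(1) by blast
      hence "X p0 j - X p0 i * X p0 j = 0" using p0(2) by simp
      thus "y j = y i * y j" by (simp add: y_def)
    next
      assume neg: "a e < 0"
      have s1: "(\<Sum>p\<in>S. u p * (X p i * X p j)) = 0"
        using Deq[OF e] De neg by (simp add: c_def)
      have g1: "\<forall>p\<in>S. u p * (X p i * X p j) = 0"
      proof (rule sum_zero_nonneg[OF S(1) _ s1])
        show "\<forall>p\<in>S. 0 \<le> u p * (X p i * X p j)" using X01 S(3) by simp
      qed
      have g2: "\<forall>p\<in>S. u p * (1 - X p i - X p j + X p i * X p j) = 0"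
      proof (rule sum_zero_nonneg[OF S(1)])
        show "\<forall>p\<in>S. 0 \<le> u p * (1 - X p i - X p j + X p i * X p j)"
        proof
          fix p assume "p \<in> S"
          hence "0 \<le> (1 - X p i) * (1 - X p j)" "0 \<le> u p" using X01 S(3) by auto
          hence "0 \<le> u p * ((1 - X p i) * (1 - X p j))" by simp
          thus "0 \<le> u p * (1 - X p i - X p j + X p i * X p j)" by (simp add: algebra_simps)
        qed
        have "(\<Sum>p\<in>S. u p * (1 - X p i - X p j + X p i * X p j)) =
            (\<Sum>p\<in>S. u p) - (\<Sum>p\<in>S. u p * X p i) - (\<Sum>p\<in>S. u p * X p j) + (\<Sum>p\<in>S. u p * (X p i * X p j))"
          by (simp add: algebra_simps sum_subtractf sum.distrib)
        thus "(\<Sum>p\<in>S. u p * (1 - X p i - X p j + X p i * X p j)) = 0"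
          using s1 fstS S(4) by simp
      qed
      have "u p0 * (X p0 i * X p0 j) = 0" using g1 p0(1) by blast
      hence "X p0 i * X p0 j = 0" using p0(2) by simp
      thus "y i * y j = 0" by (simp add: y_def)
      have "u p0 * (1 - X p0 i - X p0 j + X p0 i * X p0 j) = 0" using g2 p0(1) by blast
      hence "1 - X p0 i - X p0 j + X p0 i * X p0 j = 0" using p0(2) by simp
      thus "1 - y i - y j + y i * y j = 0" by (simp add: y_def)
    qed
  qed
  define f where "f w = (y w = 1)" for w
  have cons: "(f p \<noteq> f q) = (a e < 0)" if e: "e \<in> E" "e = {p,q}" "p \<noteq> q" for e p q
  proof (cases "a e > 0")
    case True
    hence "y p = y p * y q \<and> y q = y p * y q" using edgefact[OF e] by blast
    hence "y p = y q" by linarith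
    thus ?thesis using True by (simp add: f_def)
  next
    case False
    hence neg: "a e < 0" using nz e(1) by force
    hence h1: "y p * y q = 0" "1 - y p - y q + y p * y q = 0" using edgefact[OF e] by blast+
    hence "(y p = 0 \<and> y q = 1) \<or> (y p = 1 \<and> y q = 0)" by auto
    thus ?thesis using neg by (auto simp: f_def)
  qed
  show ?thesis
  proof (intro allI impI)
    fix vs assume cyc: "is_cycle E vs"
    let ?L = "length vs"
    have L: "?L \<ge> 3" and d: "distinct vs" using cyc by (auto simp: is_cycle_def)
    have "\<forall>k<?L. (f (vs!k) \<noteq> f (vs!((k+1) mod ?L))) = (a (ce vs k) < 0)"
    proof (intro allI impI)
      fix k assume k: "k < ?L"
      have eE: "ce vs k \<in> E" using cyc k by (simp add: is_cycle_def ce_def)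
      have m: "(k+1) mod ?L < ?L" using k by (intro mod_less_divisor) linarith
      have ne: "k \<noteq> (k+1) mod ?L" unfolding suc_mod[OF k] using L k by simp
      have "vs!k \<noteq> vs!((k+1) mod ?L)" using nth_eq_iff_index_eq[OF d k m] ne by simp
      thus "(f (vs!k) \<noteq> f (vs!((k+1) mod ?L))) = (a (ce vs k) < 0)"
        using cons[OF eE] by (simp add: ce_def)
    qed
    from cycle_parity[OF cyc this] show "even (card {e\<in>cycle_edges vs. a e < 0})"
      using card_cycle[OF cyc, of "\<lambda>e. a e < 0"] by simp
  qed
qed



lemma half_in_Q:
  fixes E :: "('n::finite) set set" and a :: "'n set \<Rightarrow> real"
  shows "((\<chi> i. 1/2) :: real^'n, \<Sum>e\<in>E. if P e then a e / 2 else 0) \<in> mccormickQ E a"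
proof -
  define h :: "real^'n" where "h = (\<chi> i. 1/2)"
  define y where "y e = (if P e then 1/2 else 0 :: real)" for e
  have hb: "h \<in> unit_box" by (simp add: h_def unit_box_def)
  have "(h, y) \<in> mccormickP E"
    unfolding mccormickP_def using hb by (auto simp: y_def h_def)
  moreover have "(\<Sum>e\<in>E. if P e then a e / 2 else 0) = (\<Sum>e\<in>E. a e * y e)"
    by (rule sum.cong) (auto simp: y_def)
  ultimately show ?thesis using hb unfolding mccormickQ_def h_def by blast
qed

lemma graphB_neg: "(\<lambda>p. (fst p, - snd p)) ` graphB E a = graphB E (\<lambda>e. - a e)"
proof -
  have bn: "bilin E (\<lambda>e. - a e) x = - bilin E a x" for x
    by (simp add: bilin_def sum_negf)
  show ?thesis
  proof (rule set_eqI)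
    fix q :: "(real^'a) \<times> real"
    obtain x z where q: "q = (x, z)" by (cases q)
    show "q \<in> (\<lambda>p. (fst p, - snd p)) ` graphB E a \<longleftrightarrow> q \<in> graphB E (\<lambda>e. - a e)"
    proof
      assume "q \<in> (\<lambda>p. (fst p, - snd p)) ` graphB E a"
      thus "q \<in> graphB E (\<lambda>e. - a e)" by (auto simp: graphB_def bn)
    next
      assume "q \<in> graphB E (\<lambda>e. - a e)"
      hence "x \<in> unit_box" "z = - bilin E a x" by (auto simp: graphB_def bn q)
      hence "(x, - z) \<in> graphB E a" "q = (fst (x, -z), - snd (x, -z))" by (auto simp: graphB_def q)
      thus "q \<in> (\<lambda>p. (fst p, - snd p)) ` graphB E a" by blast
    qed
  qed
qed

theorem theorem4:
  fixes E :: "('n::finite) set set" and a :: "'n set \<Rightarrow> real"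
  assumes "simple_graph E"
    and "\<forall>e\<in>E. a e \<noteq> 0"
  shows "mccormickQ E a = convex hull (graphB E a) \<longleftrightarrow>
    (\<forall>vs. is_cycle E vs \<longrightarrow>
       even (card {e \<in> cycle_edges vs. a e > 0}) \<and>
       even (card {e \<in> cycle_edges vs. a e < 0}))"
proof
  assume eq: "mccormickQ E a = convex hull (graphB E a)"
  have neg: "\<forall>vs. is_cycle E vs \<longrightarrow> even (card {e\<in>cycle_edges vs. a e < 0})"
    apply (rule core[OF assms])
    using half_in_Q[where P="\<lambda>e. a e > 0" and E=E and a=a] eq by simp
  have m2: "((\<chi> i. 1/2) :: real^'n, \<Sum>e\<in>E. if a e < 0 then a e / 2 else 0) \<in> convex hull graphB E a"
    using half_in_Q[where P="\<lambda>e. a e < 0" and E=E and a=a] eq by simp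
  have lin: "linear (\<lambda>p::(real^'n) \<times> real. (fst p, - snd p))"
    by (rule linearI) (auto simp: algebra_simps)
  have "(\<lambda>p. (fst p, - snd p)) ((\<chi> i. 1/2) :: real^'n, \<Sum>e\<in>E. if a e < 0 then a e / 2 else 0)
      \<in> convex hull graphB E (\<lambda>e. - a e)"
    using in_convex_hull_linear_image[OF lin m2] unfolding graphB_neg .
  moreover have "- (\<Sum>e\<in>E. if a e < 0 then a e / 2 else 0) = (\<Sum>e\<in>E. if - a e > 0 then - a e / 2 else 0)"
    unfolding sum_negf[symmetric] by (rule sum.cong) auto
  ultimately have m3: "((\<chi> i. 1/2) :: real^'n, \<Sum>e\<in>E. if - a e > 0 then - a e / 2 else 0)
      \<in> convex hull graphB E (\<lambda>e. - a e)" by (metis fst_conv snd_conv)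
  have pos: "\<forall>vs. is_cycle E vs \<longrightarrow> even (card {e\<in>cycle_edges vs. - a e < 0})"
    by (rule core[OF assms(1) _ m3]) (use assms(2) in simp)
  show "\<forall>vs. is_cycle E vs \<longrightarrow>
       even (card {e \<in> cycle_edges vs. a e > 0}) \<and>
       even (card {e \<in> cycle_edges vs. a e < 0})"
    using neg pos by simp
next
  assume cyc: "\<forall>vs. is_cycle E vs \<longrightarrow>
       even (card {e \<in> cycle_edges vs. a e > 0}) \<and>
       even (card {e \<in> cycle_edges vs. a e < 0})"
  have c1: "\<forall>vs. is_cycle E vs \<longrightarrow> even (card {e \<in> cycle_edges vs. a e < 0})" using cyc by simp
  have c2: "\<forall>vs. is_cycle E vs \<longrightarrow> even (card {e \<in> cycle_edges vs. a e > 0})" using cyc by simp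
  from balanced[OF assms(1) c1] obtain \<sigma> :: "'n \<Rightarrow> bool" where
    \<sigma>: "\<forall>e\<in>E. \<forall>i\<in>e. \<forall>j\<in>e. i \<noteq> j \<longrightarrow> (\<sigma> i \<noteq> \<sigma> j) = (a e < 0)" ..
  from balanced[OF assms(1) c2] obtain \<tau> :: "'n \<Rightarrow> bool" where
    \<tau>: "\<forall>e\<in>E. \<forall>i\<in>e. \<forall>j\<in>e. i \<noteq> j \<longrightarrow> (\<tau> i \<noteq> \<tau> j) = (a e > 0)" ..
  show "mccormickQ E a = convex hull (graphB E a)"
  proof
    show "convex hull (graphB E a) \<subseteq> mccormickQ E a"
      by (rule hull_minimal[where S=convex, OF B_sub_Q[OF assms(1), of a] Q_convex[of E a]])
  next
    show "mccormickQ E a \<subseteq> convex hull (graphB E a)"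
    proof
      fix q assume q: "q \<in> mccormickQ E a"
      obtain x z where qxz: "q = (x, z)" by (cases q)
      from q obtain y where xb: "x \<in> unit_box" and P: "(x, y) \<in> mccormickP E"
          and z: "z = (\<Sum>e\<in>E. a e * y e)"
        by (auto simp: mccormickQ_def qxz)
      define H where "H s e = (if \<forall>i\<in>e. \<forall>j\<in>e. s i = s j then Min ((\<lambda>i. x$i) ` e)
            else max 0 ((\<Sum>i\<in>e. x$i) - 1))" for s :: "'n \<Rightarrow> bool" and e
      have hi: "(x, \<Sum>e\<in>E. a e * H \<sigma> e) \<in> convex hull graphB E a"
        using thresh[OF assms(1) xb, of a \<sigma>] by (simp add: H_def)
      have lo: "(x, \<Sum>e\<in>E. a e * H \<tau> e) \<in> convex hull graphB E a"
        using thresh[OF assms(1) xb, of a \<tau>] by (simp add: H_def)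
      have bnd: "a e * H \<tau> e \<le> a e * y e \<and> a e * y e \<le> a e * H \<sigma> e" if e: "e \<in> E" for e
      proof -
        obtain i j where ij: "e = {i,j}" "i \<noteq> j" using edge2[OF assms(1) e] by blast
        have Pe: "0 \<le> y e \<and> (\<forall>i\<in>e. y e \<le> x$i) \<and>
          (\<forall>i\<in>e. \<forall>j\<in>e. i \<noteq> j \<longrightarrow> x$i + x$j - 1 \<le> y e)"
          using P e unfolding mccormickP_def by blast
        have yc: "y e \<le> x$i" "y e \<le> x$j" "x$i + x$j - 1 \<le> y e" "0 \<le> y e"
          using Pe ij by auto
        have mn: "Min ((\<lambda>i. x$i) ` e) = min (x$i) (x$j)" using ij by simp
        have sm: "(\<Sum>l\<in>e. x$l) = x$i + x$j" using ij by simp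
        have sq: "(\<forall>l\<in>e. \<forall>m\<in>e. s l = s m) = (s i = s j)" for s :: "'n \<Rightarrow> bool" using ij by auto
        have si: "(\<sigma> i = \<sigma> j) = (\<not> a e < 0)" using \<sigma> e ij by auto
        have ti: "(\<tau> i = \<tau> j) = (\<not> a e > 0)" using \<tau> e ij by auto
        have nz: "a e \<noteq> 0" using assms(2) e by blast
        show ?thesis
        proof (cases "a e > 0")
          case True
          thus ?thesis unfolding H_def sq mn sm using si ti edge_bounds[OF yc, of "a e"] by auto
        next
          case False
          hence n: "a e < 0" using nz by simp
          thus ?thesis unfolding H_def sq mn sm using si ti edge_bounds[OF yc, of "a e"] by auto
        qed
      qed
      define zl where "zl = (\<Sum>e\<in>E. a e * H \<tau> e)"
      define zh where "zh = (\<Sum>e\<in>E. a e * H \<sigma> e)"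
      have zlz: "zl \<le> z" unfolding zl_def z using bnd by (intro sum_mono) blast
      have zzh: "z \<le> zh" unfolding zh_def z using bnd by (intro sum_mono) blast
      show "q \<in> convex hull graphB E a"
      proof (cases "zl = zh")
        case True
        hence "z = zh" using zlz zzh by simp
        thus ?thesis using hi qxz zh_def by simp
      next
        case False
        hence lt: "zl < zh" using zlz zzh by simp
        define t where "t = (z - zl) / (zh - zl)"
        have t01: "0 \<le> t" "0 \<le> 1 - t" using lt zlz zzh by (auto simp: t_def field_simps)
        have "(1 - t) *\<^sub>R (x, zl) + t *\<^sub>R (x, zh) \<in> convex hull graphB E a"
          using convexD[OF convex_convex_hull lo[folded zl_def] hi[folded zh_def] t01(2) t01(1)] by simp
        moreover have "(1 - t) *\<^sub>R (x, zl) + t *\<^sub>R (x, zh) = (x, z)"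
        proof -
          have "t * (zh - zl) = z - zl" using lt by (simp add: t_def)
          hence "(1 - t) * zl + t * zh = z" by (simp add: algebra_simps)
          thus ?thesis by (simp add: algebra_simps)
        qed
        ultimately show ?thesis using qxz by simp
      qed
    qed
  qed
qed


end
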